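(* Let $X$ be a finite set and $N_X:X\times X\to\mathbb{R}$ a phylogenetic network. Then for all $x,x'\in X$, $$N_X(x,x')=\min\{U_X(x,x')\mid U_X\text{ a symmetric ultranetwork over }X\text{ with }U_X\geq N_X\text{ entrywise}\}.$$
   Context: A phylogenetic network over $X$ is a map $N_X:X\times X\to\mathbb{R}$ with $N_X(x,x')=N_X(x',x)$ and $\max\{N_X(x,x),N_X(x',x')\}\leq N_X(x,x')$ for all $x,x'\in X$. A symmetric ultranetwork over $X$ is a map $U_X:X\times X\to\mathbb{R}$ with $U_X(x,x')=U_X(x',x)$ and $U_X(x,x'')\leq\max\{U_X(x,x'),U_X(x',x'')\}$ for all $x,x',x''\in X$. *)

theory Defs
  imports Complex_Main
begin

text \<open>Maps X \<times> X \<rightarrow> real are represented as curried functions, with all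
  conditions relativised to the carrier set X.\<close>

definition phylo_network :: "'a set \<Rightarrow> ('a \<Rightarrow> 'a \<Rightarrow> real) \<Rightarrow> bool" where
  "phylo_network X N \<longleftrightarrow>
     (\<forall>x\<in>X. \<forall>x'\<in>X. N x x' = N x' x \<and> max (N x x) (N x' x') \<le> N x x')"

definition sym_ultranetwork :: "'a set \<Rightarrow> ('a \<Rightarrow> 'a \<Rightarrow> real) \<Rightarrow> bool" where
  "sym_ultranetwork X U \<longleftrightarrow>
     (\<forall>x\<in>X. \<forall>x'\<in>X. U x x' = U x' x) \<and>
     (\<forall>x\<in>X. \<forall>x'\<in>X. \<forall>x''\<in>X. U x x'' \<le> max (U x x') (U x' x''))"

end

theory Submission
  imports Defs
begin

theorem mainTheorem7:
  fixes X :: "'a set" and N :: "'a \<Rightarrow> 'a \<Rightarrow> real"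
  assumes "finite X" and "phylo_network X N"
  shows "\<forall>x\<in>X. \<forall>x'\<in>X.
    N x x' \<in> {U x x' | U. sym_ultranetwork X U \<and> (\<forall>a\<in>X. \<forall>b\<in>X. N a b \<le> U a b)} \<and>
    (\<forall>v\<in>{U x x' | U. sym_ultranetwork X U \<and> (\<forall>a\<in>X. \<forall>b\<in>X. N a b \<le> U a b)}. N x x' \<le> v)"
proof (intro ballI conjI)
  fix x x' assume x: "x \<in> X" and x': "x' \<in> X"
  define M where "M = Max ((\<lambda>p. N (fst p) (snd p)) ` (X \<times> X))"
  have fin: "finite ((\<lambda>p. N (fst p) (snd p)) ` (X \<times> X))" using assms(1) by simp
  have Mge: "N a b \<le> M" if "a \<in> X" "b \<in> X" for a b
    unfolding M_def by (rule Max_ge[OF fin]) (use that in force)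
  define S where "S = {x, x'}"
  define U where "U = (\<lambda>a b. if a \<in> S \<and> b \<in> S then N x x' else M)"
  have cM: "N x x' \<le> M" using Mge x x' by blast
  have ph: "\<And>a b. a \<in> X \<Longrightarrow> b \<in> X \<Longrightarrow> N a b = N b a \<and> max (N a a) (N b b) \<le> N a b"
    using assms(2) unfolding phylo_network_def by blast
  have "sym_ultranetwork X U"
    unfolding sym_ultranetwork_def
  proof (intro conjI ballI)
    fix a b assume "a \<in> X" "b \<in> X"
    show "U a b = U b a" unfolding U_def by simp
  next
    fix a b c assume "a \<in> X" "b \<in> X" "c \<in> X"
    show "U a c \<le> max (U a b) (U b c)"
    proof (cases "a \<in> S \<and> c \<in> S")
      case True
      then have "U a c = N x x'" unfolding U_def by simp
      moreover have "N x x' \<le> U a b" unfolding U_def using cM by simp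
      ultimately show ?thesis by linarith
    next
      case False
      then have "U a c = M" unfolding U_def by (simp only: if_False)
      moreover have "U a b = M \<or> U b c = M"
      proof (cases "b \<in> S")
        case True
        then show ?thesis using False unfolding U_def by (cases "a \<in> S") simp_all
      next
        case False
        then show ?thesis unfolding U_def by simp
      qed
      ultimately show ?thesis by linarith
    qed
  qed
  moreover have "\<forall>a\<in>X. \<forall>b\<in>X. N a b \<le> U a b"
  proof (intro ballI)
    fix a b assume a: "a \<in> X" and b: "b \<in> X"
    show "N a b \<le> U a b"
    proof (cases "a \<in> S \<and> b \<in> S")
      case True
      then show ?thesis unfolding U_def S_def using ph[OF x x'] by auto
    next
      case False then show ?thesis unfolding U_def using Mge a b by auto
    qed
  qed
  moreover have "U x x' = N x x'" unfolding U_def S_def by simp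
  ultimately have "N x x' = U x x' \<and> sym_ultranetwork X U \<and> (\<forall>a\<in>X. \<forall>b\<in>X. N a b \<le> U a b)" by simp
  then show "N x x' \<in> {U x x' | U. sym_ultranetwork X U \<and> (\<forall>a\<in>X. \<forall>b\<in>X. N a b \<le> U a b)}"
    unfolding mem_Collect_eq by (rule exI[of _ U])
next
  fix x x' v assume x: "x \<in> X" and x': "x' \<in> X"
    and v: "v \<in> {U x x' | U. sym_ultranetwork X U \<and> (\<forall>a\<in>X. \<forall>b\<in>X. N a b \<le> U a b)}"
  then show "N x x' \<le> v" by blast
qed

end
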